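(* Let $h:[0,\infty)\to[0,\infty)$ be concave and non-decreasing, let $u>l\ge0$, and let $(a_k)_{k=1}^n$, $(b_k)_{k=1}^n$ be sequences of non-negative reals with $a_k\le b_k$ for each $k$. Then $$h(a_1+h(a_2+\dots h(a_n+u)))-h(a_1+h(a_2+\dots h(a_n+l)))\ \ge\ h(b_1+h(b_2+\dots h(b_n+u)))-h(b_1+h(b_2+\dots h(b_n+l))).$$
   Context: Throughout the paper all numbers are taken to be non-negative reals. *)

theory Defs
  imports "HOL-Analysis.Analysis"
begin

text \<open>nest h a n j x = h(a_{n-j+1} + h(a_{n-j+2} + ... h(a_n + x))) (j layers, innermost a_n).
  Hence nest h a n n x = h(a_1 + h(a_2 + ... h(a_n + x))).\<close>
fun nest :: "(real \<Rightarrow> real) \<Rightarrow> (nat \<Rightarrow> real) \<Rightarrow> nat \<Rightarrow> nat \<Rightarrow> real \<Rightarrow> real" where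
  "nest h a n 0 x = x"
| "nest h a n (Suc j) x = h (a (n - j) + nest h a n j x)"

end

theory Submission
  imports Defs
begin

lemma incr_dec:
  fixes h :: "real \<Rightarrow> real"
  assumes c: "concave_on {0..} h" and p: "0 \<le> p" "p \<le> r" and d: "0 \<le> d"
  shows "h (p + d) - h p \<ge> h (r + d) - h r"
proof (cases "r + d - p = 0")
  case True
  then have "r = p" "d = 0" using p d by auto
  then show ?thesis by simp
next
  case False
  then have pos: "r + d - p > 0" using p d by auto
  define t where "t = d / (r + d - p)"
  have t0: "0 \<le> t" "t \<le> 1" using pos d p by (auto simp: t_def field_simps)
  have td: "t * (r + d - p) = d" using pos by (simp add: t_def)
  have e1: "(1 - t) *\<^sub>R p + t *\<^sub>R (r + d) = p + d"
    using td by (simp add: algebra_simps)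
  have e2: "(1 - (1 - t)) *\<^sub>R p + (1 - t) *\<^sub>R (r + d) = r"
    using td by (simp add: algebra_simps)
  have "h ((1 - t) *\<^sub>R p + t *\<^sub>R (r + d)) \<ge> (1 - t) * h p + t * h (r + d)"
    using concave_onD[OF c, of t p "r + d"] t0 p d by auto
  moreover have "h ((1 - (1 - t)) *\<^sub>R p + (1 - t) *\<^sub>R (r + d)) \<ge> (1 - (1 - t)) * h p + (1 - t) * h (r + d)"
    using concave_onD[OF c, of "1 - t" p "r + d"] t0 p d by auto
  ultimately show ?thesis unfolding e1 e2 by (simp add: algebra_simps)
qed

lemma step:
  fixes h :: "real \<Rightarrow> real"
  assumes c: "concave_on {0..} h" and m: "mono_on {0..} h"
    and "0 \<le> p" "p \<le> q" "0 \<le> r" "r \<le> s" "p \<le> r" "s - r \<le> q - p"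
  shows "h q - h p \<ge> h s - h r"
proof -
  have "h (p + (s - r)) \<le> h q"
    using assms by (intro mono_onD[OF m]) auto
  moreover have "h (p + (s - r)) - h p \<ge> h (r + (s - r)) - h r"
    using assms by (intro incr_dec[OF c]) auto
  ultimately show ?thesis by simp
qed

theorem lemma3:
  fixes h :: "real \<Rightarrow> real" and a b :: "nat \<Rightarrow> real" and n :: nat and u l :: real
  assumes "concave_on {0..} h"
    and "mono_on {0..} h"
    and "\<And>x. x \<ge> 0 \<Longrightarrow> h x \<ge> 0"
    and "n \<ge> 1"
    and "0 \<le> l" and "l < u"
    and "\<And>k. k \<in> {1..n} \<Longrightarrow> 0 \<le> a k"
    and "\<And>k. k \<in> {1..n} \<Longrightarrow> 0 \<le> b k"
    and "\<And>k. k \<in> {1..n} \<Longrightarrow> a k \<le> b k"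
  shows "nest h a n n u - nest h a n n l \<ge> nest h b n n u - nest h b n n l"
proof -
  have "j \<le> n \<Longrightarrow> 0 \<le> nest h a n j l \<and> nest h a n j l \<le> nest h a n j u
     \<and> 0 \<le> nest h b n j l \<and> nest h b n j l \<le> nest h b n j u
     \<and> nest h a n j l \<le> nest h b n j l
     \<and> nest h b n j u - nest h b n j l \<le> nest h a n j u - nest h a n j l" for j
  proof (induction j)
    case 0
    then show ?case using assms by simp
  next
    case (Suc j)
    then have IH: "0 \<le> nest h a n j l" "nest h a n j l \<le> nest h a n j u"
     "0 \<le> nest h b n j l" "nest h b n j l \<le> nest h b n j u"
     "nest h a n j l \<le> nest h b n j l"
     "nest h b n j u - nest h b n j l \<le> nest h a n j u - nest h a n j l" by auto
    have k: "n - j \<in> {1..n}" using Suc.prems by auto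
    note ab = assms(7)[OF k] assms(8)[OF k] assms(9)[OF k]
    show ?case
      using IH ab
      apply (simp only: nest.simps)
      apply (intro conjI)
           apply (rule assms(3); linarith)
          apply (rule mono_onD[OF assms(2)]; simp; linarith)
         apply (rule assms(3); linarith)
        apply (rule mono_onD[OF assms(2)]; simp; linarith)
       apply (rule mono_onD[OF assms(2)]; simp; linarith)
      apply (rule step[OF assms(1,2)]; linarith)
      done
  qed
  then show ?thesis by simp
qed

end
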